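(* Let $M=\mathbb{CP}^2\#k\overline{\mathbb{CP}^2}$. There is no reduced class $A=aH-\sum_{i=1}^k b_iE_i\in H_2(M;\mathbb Z)$ with $A\cdot A=-4$ and $\min_i b_i\ge1$ in any of the following cases: (1) $k\ge11$ and $K_{st}\cdot A\le2$; (2) $k=10$ and $K_{st}\cdot A<2$; (3) $k=10$, $K_{st}\cdot A=2$ and $\min_i b_i\ge3$.
   Context: $\{H,E_1,\dots,E_k\}$ is the standard basis of $H_2(M;\mathbb Z)$ ($H^2=1$, $E_i^2=-1$, pairwise orthogonal), and $K_{st}=-3H+\sum_{i=1}^kE_i$ is the standard canonical class. A class $aH-\sum b_iE_i$ is reduced if $b_1\ge\cdots\ge b_k\ge0$ and $a\ge b_1+b_2+b_3$. *)

theory Defs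
  imports Main
begin

text \<open>A class a H - sum_{i=1..k} b_i E_i in H_2(CP^2 # k (-CP^2); Z) is represented by the
  pair (a, b) with a :: int and b :: nat => int, only the values b 1, ..., b k being relevant.\<close>

definition cls_dot :: "nat \<Rightarrow> int \<times> (nat \<Rightarrow> int) \<Rightarrow> int \<times> (nat \<Rightarrow> int) \<Rightarrow> int" where
  "cls_dot k A B = fst A * fst B - (\<Sum>i=1..k. snd A i * snd B i)"

text \<open>K_st = -3H + sum E_i = -3H - sum (-1) E_i.\<close>
definition K_st :: "int \<times> (nat \<Rightarrow> int)" where
  "K_st = (-3, (\<lambda>_. -1))"

definition reduced :: "nat \<Rightarrow> int \<times> (nat \<Rightarrow> int) \<Rightarrow> bool" where
  "reduced k A \<longleftrightarrow>
     (\<forall>i j. 1 \<le> i \<longrightarrow> i \<le> j \<longrightarrow> j \<le> k \<longrightarrow> snd A j \<le> snd A i) \<and>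
     (\<forall>i\<in>{1..k}. 0 \<le> snd A i) \<and>
     snd A 1 + snd A 2 + snd A 3 \<le> fst A"

end

theory Submission
  imports Defs
begin

lemma split_sum:
  fixes f :: "nat \<Rightarrow> int"
  assumes "k \<ge> 3"
  shows "(\<Sum>i=1..k. f i) = f 1 + f 2 + f 3 + (\<Sum>i=4..k. f i)"
proof -
  have "{1..k} = {1,2,3} \<union> {4..k}" using assms by auto
  then have "(\<Sum>i=1..k. f i) = (\<Sum>i\<in>{1,2,3}. f i) + (\<Sum>i=4..k. f i)"
    by (simp add: sum.union_disjoint)
  then show ?thesis by simp
qed

lemma sum_quad:
  fixes f :: "nat \<Rightarrow> int" and b m :: int
  assumes "\<And>i. i \<in> {4..k} \<Longrightarrow> m \<le> f i \<and> f i \<le> b"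
  shows "(\<Sum>i=4..k. f i * f i) \<le> (b + m) * (\<Sum>i=4..k. f i) - m * b * int (card {4..k})"
proof -
  have "0 \<le> (\<Sum>i=4..k. (b - f i) * (f i - m))"
    by (rule sum_nonneg) (use assms in auto)
  also have "(\<Sum>i=4..k. (b - f i) * (f i - m)) = (\<Sum>i=4..k. (b + m) * f i - f i * f i - m * b)"
    by (rule sum.cong) (auto simp: algebra_simps)
  also have "\<dots> = (b + m) * (\<Sum>i=4..k. f i) - (\<Sum>i=4..k. f i * f i) - m * b * int (card {4..k})"
    by (simp add: sum_subtractf sum_distrib_left)
  finally show ?thesis by linarith
qed

theorem proposition5p5:
  fixes k :: nat
  shows "\<not> (\<exists>a b. reduced k (a, b) \<and> cls_dot k (a, b) (a, b) = -4 \<and>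
             (\<forall>i\<in>{1..k}. 1 \<le> b i) \<and>
             ((k \<ge> 11 \<and> cls_dot k K_st (a, b) \<le> 2) \<or>
              (k = 10 \<and> cls_dot k K_st (a, b) < 2) \<or>
              (k = 10 \<and> cls_dot k K_st (a, b) = 2 \<and> (\<forall>i\<in>{1..k}. 3 \<le> b i))))"
proof
  assume "\<exists>a b. reduced k (a, b) \<and> cls_dot k (a, b) (a, b) = -4 \<and>
             (\<forall>i\<in>{1..k}. 1 \<le> b i) \<and>
             ((k \<ge> 11 \<and> cls_dot k K_st (a, b) \<le> 2) \<or>
              (k = 10 \<and> cls_dot k K_st (a, b) < 2) \<or>
              (k = 10 \<and> cls_dot k K_st (a, b) = 2 \<and> (\<forall>i\<in>{1..k}. 3 \<le> b i)))"
  then obtain a bb where red: "reduced k (a, bb)" and sq: "cls_dot k (a, bb) (a, bb) = -4"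
    and pos: "\<forall>i\<in>{1..k}. 1 \<le> bb i"
    and cs: "(k \<ge> 11 \<and> cls_dot k K_st (a, bb) \<le> 2) \<or>
              (k = 10 \<and> cls_dot k K_st (a, bb) < 2) \<or>
              (k = 10 \<and> cls_dot k K_st (a, bb) = 2 \<and> (\<forall>i\<in>{1..k}. 3 \<le> bb i))"
    by blast
  have k10: "k \<ge> 10" using cs by auto
  define b1 where "b1 = bb 1"
  define b2 where "b2 = bb 2"
  define b where "b = bb 3"
  define S where "S = (\<Sum>i=4..k. bb i)"
  define Q where "Q = (\<Sum>i=4..k. bb i * bb i)"
  define n where "n = int k - 3"
  have cardn: "int (card {4..k}) = n" using k10 by (simp add: n_def)
  have mono: "\<And>i j. 1 \<le> i \<Longrightarrow> i \<le> j \<Longrightarrow> j \<le> k \<Longrightarrow> bb j \<le> bb i"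
    using red unfolding reduced_def by auto
  have ord: "b2 \<le> b1" "b \<le> b2" unfolding b1_def b2_def b_def using mono k10 by auto
  have b1: "1 \<le> b" unfolding b_def using pos k10 by auto
  have aT: "b1 + b2 + b \<le> a" using red unfolding reduced_def b1_def b2_def b_def by auto
  have rng: "\<And>i. i \<in> {4..k} \<Longrightarrow> 1 \<le> bb i \<and> bb i \<le> b"
    using pos mono k10 unfolding b_def by auto
  have Qle: "Q \<le> (b + 1) * S - b * n"
    using sum_quad[of k 1 bb b, OF rng] cardn unfolding Q_def S_def by simp
  have q: "a * a - (b1*b1 + b2*b2 + b*b + Q) = -4"
    using sq split_sum[of k "\<lambda>i. bb i * bb i"] k10
    unfolding cls_dot_def b1_def b2_def b_def Q_def by simp
  define c where "c = cls_dot k K_st (a, bb)"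
  have cdef: "c = -3 * a + b1 + b2 + b + S"
    using split_sum[of k "\<lambda>i. -1 * bb i"] k10
    unfolding c_def cls_dot_def K_st_def b1_def b2_def b_def S_def by (simp add: sum_negf)
  define x where "x = b1 - b"
  define y where "y = b2 - b"
  define d where "d = a - b1 - b2 - b"
  have x0: "x \<ge> 0" and y0: "y \<ge> 0" and d0: "d \<ge> 0"
    using ord aT unfolding x_def y_def d_def by auto
  have iden: "b * c - (b1*b1 + b2*b2 + b*b + Q - a*a) =
      2*b*(x+y) + 3*b*d + (b*S - Q) + 2*x*y + d*d + 2*d*(x+y)"
    unfolding cdef x_def y_def d_def by (simp add: algebra_simps)
  have Sle: "S \<le> b * n"
  proof -
    have "S \<le> (\<Sum>i=4..k. b)" unfolding S_def by (rule sum_mono) (use rng in auto)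
    then show ?thesis using cardn by (simp add: mult.commute)
  qed
  have bSQ: "b*S - Q \<ge> 0" using Qle Sle by (simp add: algebra_simps)
  have nn: "x*y \<ge> 0" "d*d \<ge> 0" "d*(x+y) \<ge> 0" "b*(x+y) \<ge> 0" "b*d \<ge> 0"
    using x0 y0 d0 b1 by auto
  have main: "b * c = 4 + 2*b*(x+y) + 3*b*d + (b*S - Q) + 2*x*y + d*d + 2*d*(x+y)"
    using iden q by linarith
  have c2: "c \<le> 2" using cs unfolding c_def by auto
  have "b * c \<le> b * 2" using c2 b1 by (simp add: mult_left_mono)
  then have lt: "2*b*(x+y) + 3*b*d < 2*b" using main nn bSQ by linarith
  have xy0: "x + y = 0"
  proof (rule ccontr)
    assume "x + y \<noteq> 0"
    then have "x + y \<ge> 1" using x0 y0 by linarith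
    then have "b*(x+y) \<ge> b*1" using b1 by (intro mult_left_mono) auto
    then show False using lt nn by linarith
  qed
  have dd0: "d = 0"
  proof (rule ccontr)
    assume "d \<noteq> 0"
    then have "d \<ge> 1" using d0 by linarith
    then have "b*d \<ge> b*1" using b1 by (intro mult_left_mono) auto
    then show False using lt nn by linarith
  qed
  have xz: "x = 0" "y = 0" using xy0 x0 y0 by auto
  have main2: "b * c = 4 + (b*S - Q)" using main xz dd0 by simp
  have cS: "c = S - 6*b" using cdef xz dd0 unfolding x_def y_def d_def by simp
  have cpos: "c \<ge> 1"
  proof (rule ccontr)
    assume "\<not> c \<ge> 1"
    then have "c \<le> 0" by simp
    then have "b * c \<le> 0" using b1 by (simp add: mult_nonneg_nonpos)
    then show False using main2 bSQ by linarith
  qed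
  show False
  proof (cases "c = 1")
    case True
    have n7: "n \<ge> 7" using k10 unfolding n_def by simp
    have "(n - 7) * b \<ge> 0" using n7 b1 by simp
    then show False using True main2 cS Qle by (simp add: algebra_simps)
  next
    case False
    then have c2e: "c = 2" using cpos c2 by simp
    have k10e: "k = 10"
    proof (rule ccontr)
      assume "k \<noteq> 10"
      then have n8: "n \<ge> 8" using k10 unfolding n_def by simp
      have "(n - 8) * b \<ge> 0" using n8 b1 by simp
      then show False using c2e main2 cS Qle by (simp add: algebra_simps)
    qed
    have b3: "\<forall>i\<in>{1..k}. 3 \<le> bb i" using cs c2e k10e unfolding c_def by (elim disjE) auto
    have n7: "n = 7" using k10e unfolding n_def by simp
    have rng3: "\<And>i. i \<in> {4..k} \<Longrightarrow> 3 \<le> bb i \<and> bb i \<le> b"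
      using rng b3 k10 by auto
    have Qle3: "Q \<le> (b + 3) * S - 3 * b * n"
      using sum_quad[of k 3 bb b, OF rng3] cardn unfolding Q_def S_def by simp
    have bge3: "b \<ge> 3" using b3 k10 unfolding b_def by auto
    have "Q = 6*b*b + 4" using main2 c2e cS by (simp add: algebra_simps)
    then show False using Qle3 n7 c2e cS bge3 by (simp add: algebra_simps)
  qed
qed

end
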